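(* Let $D$ be a delta-matroid on $[n,\overline{n}]$ and let $\square=[-1,1]^n$. The map $S\mapsto e_S$ induces a bijection between the independent sets of $D$ and the lattice points (points of $\mathbb{Z}^n$) of the polytope $\frac{1}{2}(P(D)+\square)$, where $+$ denotes Minkowski sum.
   Context: Let $[n,\overline{n}]=\{1,\dots,n,\overline{1},\dots,\overline{n}\}$ with involution $a\mapsto\overline{a}$; $\overline{S}=\{\overline{a}:a\in S\}$. A subset is admissible if it contains at most one of $i,\overline{i}$ for each $i$; $\operatorname{AdS}_n$ is the set of admissible subsets. In $\mathbb{R}^n$ set $e_{\overline{i}}=-e_i$, $e_S=\sum_{a\in S}e_a$. A delta-matroid $D$ on $[n,\overline{n}]$ is a nonempty collection $\mathcal{F}$ of admissible sets of size $n$ (feasible sets) such that $P(D)=\operatorname{Conv}\{e_B:B\in\mathcal{F}\}$ has all edges parallel to some $e_i$ or $e_i\pm e_j$. Rank function: $g_D(S)=\max_{B\in\mathcal{F}}(|S\cap B|-|\overline{S}\cap B|)$. An admissible $S$ is independent in $D$ if $g_D(S)=|S|$, equivalently if $S$ is contained in a feasible set. *)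

theory Defs
  imports "HOL-Analysis.Analysis"
begin

text \<open>The ground set [n, nbar] is modelled as the type 'n \<times> bool, where n = CARD('n):
  (i, True) stands for i and (i, False) stands for its bar.\<close>

definition bar :: "'n \<times> bool \<Rightarrow> 'n \<times> bool" where
  "bar a = (fst a, \<not> snd a)"

definition barset :: "('n \<times> bool) set \<Rightarrow> ('n \<times> bool) set" where
  "barset S = bar ` S"

definition admissible :: "('n \<times> bool) set \<Rightarrow> bool" where
  "admissible S \<longleftrightarrow> (\<forall>i. \<not> ((i, True) \<in> S \<and> (i, False) \<in> S))"

definition evec :: "'n::finite \<times> bool \<Rightarrow> real ^ 'n" where
  "evec a = (if snd a then axis (fst a) 1 else - axis (fst a) 1)"

definition eset :: "('n::finite \<times> bool) set \<Rightarrow> real ^ 'n" where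
  "eset S = (\<Sum>a\<in>S. evec a)"

definition dm_polytope :: "('n::finite \<times> bool) set set \<Rightarrow> (real ^ 'n) set" where
  "dm_polytope F = convex hull (eset ` F)"

definition edge_dirs :: "(real ^ 'n::finite) set" where
  "edge_dirs = {axis i 1 | i. True}
     \<union> {axis i 1 + axis j 1 | i j. i \<noteq> j}
     \<union> {axis i 1 - axis j 1 | i j. i \<noteq> j}"

definition is_edge :: "(real ^ 'n::finite) set \<Rightarrow> (real ^ 'n) set \<Rightarrow> bool" where
  "is_edge E P \<longleftrightarrow> E face_of P \<and> aff_dim E = 1"

definition delta_matroid :: "('n::finite \<times> bool) set set \<Rightarrow> bool" where
  "delta_matroid F \<longleftrightarrow>
     F \<noteq> {} \<and>
     (\<forall>B\<in>F. admissible B \<and> card B = CARD('n)) \<and>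
     (\<forall>E. is_edge E (dm_polytope F) \<longrightarrow>
        (\<exists>v\<in>edge_dirs. \<forall>x\<in>E. \<forall>y\<in>E. \<exists>c::real. y - x = c *\<^sub>R v))"

definition dm_rank :: "('n::finite \<times> bool) set set \<Rightarrow> ('n \<times> bool) set \<Rightarrow> int" where
  "dm_rank F S = Max ((\<lambda>B. int (card (S \<inter> B)) - int (card (barset S \<inter> B))) ` F)"

definition dm_independent :: "('n::finite \<times> bool) set set \<Rightarrow> ('n \<times> bool) set \<Rightarrow> bool" where
  "dm_independent F S \<longleftrightarrow> admissible S \<and> dm_rank F S = int (card S)"

definition minkowski_sum :: "('a::ab_group_add) set \<Rightarrow> 'a set \<Rightarrow> 'a set" where
  "minkowski_sum A B = {a + b | a b. a \<in> A \<and> b \<in> B}"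

definition unit_cube :: "(real ^ 'n::finite) set" where
  "unit_cube = {x. \<forall>i. -1 \<le> x $ i \<and> x $ i \<le> 1}"

definition lattice_points :: "(real ^ 'n::finite) set \<Rightarrow> (real ^ 'n) set" where
  "lattice_points P = {x \<in> P. \<forall>i. x $ i \<in> \<int>}"

end

theory Submission
  imports Defs
begin

lemma evec_nth: "evec a $ i = (if a = (i,True) then 1 else 0) - (if a = (i,False) then (1::real) else 0)"
  by (cases a) (auto simp: evec_def axis_def)

lemma eset_nth: "eset (S::('n::finite \<times> bool) set) $ i
   = (if (i,True)\<in>S then 1 else 0) - (if (i,False)\<in>S then 1 else 0)"
proof -
  have "eset S $ i = (\<Sum>a\<in>S. evec a $ i)" unfolding eset_def by (rule sum_component)
  also have "\<dots> = (\<Sum>a\<in>S. (if a = (i,True) then 1 else 0)) - (\<Sum>a\<in>S. (if a = (i,False) then (1::real) else 0))"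
    unfolding evec_nth by (rule sum_subtractf)
  also have "\<dots> = (if (i,True)\<in>S then 1 else 0) - (if (i,False)\<in>S then 1 else 0)"
    by (simp add: sum.delta)
  finally show ?thesis .
qed

lemma feas_exact:
  fixes B :: "('n::finite \<times> bool) set"
  assumes "admissible B" "card B = CARD('n)"
  shows "(i,False) \<in> B \<longleftrightarrow> (i,True) \<notin> B"
proof -
  have inj: "inj_on fst B"
    using assms(1) unfolding admissible_def inj_on_def
    by (metis (full_types) prod.collapse)
  have "card (fst ` B) = CARD('n)" using card_image[OF inj] assms(2) by simp
  then have "fst ` B = UNIV" by (simp add: card_subset_eq)
  then obtain a where "a \<in> B" "fst a = i" by (metis UNIV_I imageE)
  then have "(i, snd a) \<in> B" by (metis prod.collapse)
  then show ?thesis using assms(1) unfolding admissible_def by (cases "snd a") auto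
qed

lemma adm_nth:
  assumes "admissible S"
  shows "(i,True) \<in> S \<longleftrightarrow> eset S $ i = 1" "(i,False) \<in> S \<longleftrightarrow> eset S $ i = -1"
  using assms unfolding admissible_def eset_nth by auto

lemma inj_eset: "inj_on eset {S::('n::finite \<times> bool) set. admissible S}"
proof (rule inj_onI)
  fix S T :: "('n \<times> bool) set"
  assume "S \<in> {S. admissible S}" "T \<in> {S. admissible S}" "eset S = eset T"
  then have aS: "admissible S" and aT: "admissible T" by auto
  show "S = T"
  proof (rule set_eqI)
    fix a :: "'n \<times> bool"
    obtain i b where a: "a = (i,b)" by (cases a)
    show "a \<in> S \<longleftrightarrow> a \<in> T"
      using adm_nth[OF aS, of i] adm_nth[OF aT, of i] \<open>eset S = eset T\<close> a by (cases b) auto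
  qed
qed

lemma indep_iff:
  fixes F :: "('n::finite \<times> bool) set set"
  assumes "delta_matroid F"
  shows "dm_independent F S \<longleftrightarrow> admissible S \<and> (\<exists>B\<in>F. S \<subseteq> B)"
proof -
  have fin: "finite F" by simp
  have ne: "F \<noteq> {}" using assms unfolding delta_matroid_def by auto
  let ?g = "\<lambda>B. int (card (S \<inter> B)) - int (card (barset S \<inter> B))"
  have le: "?g B \<le> int (card S)" for B
  proof -
    have "card (S \<inter> B) \<le> card S" by (simp add: card_mono)
    then show ?thesis by linarith
  qed
  show ?thesis
  proof
    assume "dm_independent F S"
    then have adm: "admissible S" and r: "Max (?g ` F) = int (card S)"
      unfolding dm_independent_def dm_rank_def by auto
    obtain B where B: "B \<in> F" "?g B = int (card S)"
      using Max_in[of "?g ` F"] fin ne r by (metis (no_types, lifting) empty_is_image finite_imageI imageE)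
    then have "card (S \<inter> B) \<ge> card S" by linarith
    then have "S \<inter> B = S" by (metis card_seteq finite Int_lower1)
    then show "admissible S \<and> (\<exists>B\<in>F. S \<subseteq> B)" using adm B by blast
  next
    assume h: "admissible S \<and> (\<exists>B\<in>F. S \<subseteq> B)"
    then obtain B where B: "B \<in> F" "S \<subseteq> B" by blast
    have aB: "admissible B" using assms B unfolding delta_matroid_def by auto
    have "barset S \<inter> B = {}"
    proof (rule ccontr)
      assume "barset S \<inter> B \<noteq> {}"
      then obtain a where "a \<in> S" "bar a \<in> B" unfolding barset_def by auto
      with B aB show False unfolding admissible_def bar_def
        by (cases a, cases "snd a") auto
    qed
    then have gB: "?g B = int (card S)" using B by (simp add: Int_absorb2)
    have "Max (?g ` F) = int (card S)"
    proof (rule antisym)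
      show "Max (?g ` F) \<le> int (card S)" by (rule Max.boundedI) (use fin ne le in auto)
      have "?g B \<le> Max (?g ` F)" by (rule Max_ge) (use fin B in auto)
      then show "int (card S) \<le> Max (?g ` F)" using gB by simp
    qed
    then show "dm_independent F S" using h unfolding dm_independent_def dm_rank_def by simp
  qed
qed

lemma convex_unit_cube: "convex (unit_cube :: (real ^ 'n::finite) set)"
proof -
  have "unit_cube = (\<Inter>i. {x::real^'n. inner (axis i 1) x \<le> 1} \<inter> {x. inner (- axis i 1) x \<le> 1})"
    unfolding unit_cube_def by (auto simp: inner_axis')
  moreover have "convex (\<Inter>i. {x::real^'n. inner (axis i 1) x \<le> 1} \<inter> {x. inner (- axis i 1) x \<le> 1})"
    by (intro convex_INT ballI convex_Int convex_halfspace_le)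
  ultimately show ?thesis by simp
qed

lemma inner_vec_real: "inner (x::real^'n::finite) y = (\<Sum>i\<in>UNIV. x$i * y$i)"
  by (simp add: inner_vec_def)

theorem proposition3p6:
  fixes F :: "('n::finite \<times> bool) set set"
  assumes "delta_matroid F"
  shows "bij_betw eset {S. dm_independent F S}
           (lattice_points ((\<lambda>x. (1/2::real) *\<^sub>R x) ` minkowski_sum (dm_polytope F) unit_cube))"
proof -
  have fF: "admissible B" "card B = CARD('n)" if "B \<in> F" for B
    using assms that unfolding delta_matroid_def by auto
  have feas_nth: "eset B $ i = (if (i,True)\<in>B then 1 else -1)" if "B \<in> F" for B i
    using feas_exact[OF fF[OF that], of i] unfolding eset_nth by auto
  have P_box: "dm_polytope F \<subseteq> unit_cube"
    unfolding dm_polytope_def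
  proof (rule hull_minimal)
    show "eset ` F \<subseteq> unit_cube" unfolding unit_cube_def using feas_nth by auto
  qed (rule convex_unit_cube)
  have inj: "inj_on eset {S. dm_independent F S}"
    by (rule inj_on_subset[OF inj_eset]) (auto simp: dm_independent_def)
  have sub: "eset ` {S. dm_independent F S} \<subseteq>
     lattice_points ((\<lambda>x. (1/2::real) *\<^sub>R x) ` minkowski_sum (dm_polytope F) unit_cube)"
  proof
    fix y assume "y \<in> eset ` {S. dm_independent F S}"
    then obtain S where y: "y = eset S" and ind: "dm_independent F S" by auto
    then obtain B where B: "B \<in> F" "S \<subseteq> B" and aS: "admissible S"
      using indep_iff[OF assms] by auto
    define c where "c = 2 *\<^sub>R eset S - eset B"
    have yeq: "y = (1/2::real) *\<^sub>R (eset B + c)" unfolding c_def y by simp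
    have eB: "eset B \<in> dm_polytope F" unfolding dm_polytope_def using B by (simp add: hull_inc)
    have cc: "c \<in> unit_cube"
      unfolding unit_cube_def
    proof (intro CollectI allI)
      fix i
      have ex: "(i,False) \<in> B \<longleftrightarrow> (i,True) \<notin> B" using feas_exact[OF fF[OF B(1)]] .
      show "- 1 \<le> c $ i \<and> c $ i \<le> 1"
        unfolding c_def using B(2) ex aS unfolding admissible_def
        by (auto simp: eset_nth)
    qed
    have "y \<in> (\<lambda>x. (1/2::real) *\<^sub>R x) ` minkowski_sum (dm_polytope F) unit_cube"
      unfolding minkowski_sum_def using yeq eB cc by blast
    moreover have "\<forall>i. y $ i \<in> \<int>" unfolding y eset_nth by auto
    ultimately show "y \<in> lattice_points ((\<lambda>x. (1/2::real) *\<^sub>R x) ` minkowski_sum (dm_polytope F) unit_cube)"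
      unfolding lattice_points_def by auto
  qed
  have sup: "lattice_points ((\<lambda>x. (1/2::real) *\<^sub>R x) ` minkowski_sum (dm_polytope F) unit_cube)
     \<subseteq> eset ` {S. dm_independent F S}"
  proof
    fix x assume "x \<in> lattice_points ((\<lambda>x. (1/2::real) *\<^sub>R x) ` minkowski_sum (dm_polytope F) unit_cube)"
    then obtain p c where xint: "\<forall>i. x $ i \<in> \<int>" and x: "x = (1/2::real) *\<^sub>R (p + c)"
      and p: "p \<in> dm_polytope F" and c: "c \<in> unit_cube"
      unfolding lattice_points_def minkowski_sum_def by auto
    have pb: "-1 \<le> p $ i \<and> p $ i \<le> 1" for i using P_box p unfolding unit_cube_def by auto
    have cb: "-1 \<le> c $ i \<and> c $ i \<le> 1" for i using c unfolding unit_cube_def by auto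
    have xi: "x $ i = 1/2 * (p $ i + c $ i)" for i using x by simp
    have x3: "x $ i = 1 \<or> x $ i = 0 \<or> x $ i = -1" for i
    proof -
      obtain k where k: "x $ i = of_int k" using xint by (meson Ints_cases)
      have "-1 \<le> x $ i" "x $ i \<le> 1" using xi[of i] pb[of i] cb[of i] by auto
      then have "-1 \<le> k" "k \<le> 1" using k by auto
      then have "k = 1 \<or> k = 0 \<or> k = -1" by auto
      then show ?thesis using k by auto
    qed
    have px: "x $ i \<noteq> 0 \<Longrightarrow> p $ i = x $ i" for i
      using x3[of i] xi[of i] pb[of i] cb[of i] by auto
    define S where "S = {a. x $ fst a = (if snd a then 1 else -1)}"
    have memS: "(i,True) \<in> S \<longleftrightarrow> x $ i = 1" "(i,False) \<in> S \<longleftrightarrow> x $ i = -1" for i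
      unfolding S_def by auto
    have aS: "admissible S" unfolding admissible_def memS by auto
    have xS: "eset S = x"
    proof (rule vec_eq_iff[THEN iffD2], rule allI)
      fix i show "eset S $ i = x $ i" unfolding eset_nth memS using x3[of i] by auto
    qed
    have "\<exists>B\<in>F. S \<subseteq> B"
    proof (rule ccontr)
      assume nB: "\<not> (\<exists>B\<in>F. S \<subseteq> B)"
      have lt: "inner x (eset B) < inner x x" if B: "B \<in> F" for B
      proof -
        obtain a where a: "a \<in> S" "a \<notin> B" using nB B by blast
        obtain i b where ab: "a = (i,b)" by (cases a)
        have ex: "(i,False) \<in> B \<longleftrightarrow> (i,True) \<notin> B" using feas_exact[OF fF[OF B]] .
        have "(\<Sum>j\<in>UNIV. x$j * eset B $ j) < (\<Sum>j\<in>UNIV. x$j * x$j)"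
        proof (rule sum_strict_mono_ex1)
          show "\<forall>j\<in>UNIV. x$j * eset B $ j \<le> x$j * x$j"
          proof
            fix j show "x$j * eset B $ j \<le> x$j * x$j"
              using x3[of j] unfolding feas_nth[OF B] by auto
          qed
          show "\<exists>j\<in>UNIV. x$j * eset B $ j < x$j * x$j"
          proof (intro bexI[of _ i] UNIV_I)
            show "x$i * eset B $ i < x$i * x$i"
              using a ab ex memS[of i] unfolding feas_nth[OF B] by (cases b) auto
          qed
        qed simp
        then show ?thesis by (simp add: inner_vec_real)
      qed
      have "p \<in> {y. inner x y < inner x x}"
        using p unfolding dm_polytope_def
        using hull_minimal[of "eset ` F" "{y. inner x y < inner x x}" convex] lt
        by (auto simp: convex_halfspace_lt)
      moreover have "inner x p = inner x x"
        unfolding inner_vec_real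
      proof (rule sum.cong[OF refl])
        fix j show "x$j * p$j = x$j * x$j" using px[of j] by (cases "x $ j = 0") auto
      qed
      ultimately show False by simp
    qed
    then have "dm_independent F S" using indep_iff[OF assms] aS by auto
    then show "x \<in> eset ` {S. dm_independent F S}" using xS by blast
  qed
  show ?thesis unfolding bij_betw_def using inj sub sup by blast
qed

end
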